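(* Let $F$ be a euclidean field, $B=F[\![X]\!]$, and $f\in B\setminus\{0\}$. Then $$\operatorname{PO}(f)=\begin{cases}\Phi(F^2,0)\cup\Phi(\epsilon(f)F^2,\mathrm{val}(f)) & \text{if } \mathrm{val}(f)\text{ is odd},\\ \Phi(F^2,0) & \text{if } \mathrm{val}(f)\text{ is even and }\epsilon(f)=1,\\ \Phi(F^2,0)\cup\Phi(F,\mathrm{val}(f))\cup\Phi(F,\mathrm{val}(f)+1) & \text{otherwise.}\end{cases}$$ In particular, $\operatorname{PO}(f)=\operatorname{PO}(1)$ if $\mathrm{val}(f)$ is even and $\epsilon(f)=1$, and $\operatorname{PO}(f)=\operatorname{PO}(\epsilon(f)X^{\mathrm{val}(f)})$ otherwise.
   Context: A euclidean field is a formally real field $F$ with $F=F^2\cup(-F^2)$, where $F^2=\{c^2:c\in F\}$; for $c\in F\setminus\{0\}$ its sign is $1$ if $c\in F^2$ and $-1$ if $-c\in F^2$; for $\epsilon\in\{\pm1\}$, $\epsilon F^2=\{\epsilon c^2: c\in F\}$. Let $B=F[\![X]\!]$, and for nonzero $f=\sum_{i\ge n}a_iX^i\in B$ with $a_n\ne0$ let $\mathrm{val}(f)=n$ (the order of $f$) and $\mathrm{an}(f)=a_n$ (its leading coefficient); $\epsilon(f)$ is the sign of $\mathrm{an}(f)$. For a subset $M\subseteq F$ (a quasi-quadratic module of $F$) and an integer $n\ge0$, $$\Phi(M,n)=\{x\in B\setminus\{0\}:\ \mathrm{val}(x)\equiv n \pmod 2,\ \mathrm{val}(x)\ge n,\ \mathrm{an}(x)\in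 M\}\cup\{0\}.$$ For $g\in B$, $\operatorname{PO}(g)=\{\sigma_0+\sigma_1g:\ \sigma_0,\sigma_1\in\sum B^2\}$ is the monogenic quadratic module (preordering) generated by $g$, where $\sum B^2$ is the set of finite sums of squares in $B$. *)

theory Defs
  imports "HOL-Computational_Algebra.Formal_Power_Series"
begin

definition squares :: "'a::comm_ring_1 set" where
  "squares = {c ^ 2 | c. True}"

definition sum_squares :: "'a::comm_ring_1 set" where
  "sum_squares = {sum_list (map (\<lambda>x. x ^ 2) xs) | xs. True}"

definition formally_real :: "'a::field itself \<Rightarrow> bool" where
  "formally_real _ \<longleftrightarrow> (- 1 :: 'a) \<notin> sum_squares"

definition euclidean_field :: "'a::field itself \<Rightarrow> bool" where
  "euclidean_field T \<longleftrightarrow> formally_real T \<and>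
     (UNIV :: 'a set) = squares \<union> uminus ` squares"

definition fsign :: "'a::field \<Rightarrow> 'a" where
  "fsign c = (if c \<in> squares then 1 else - 1)"

text \<open>val(f) = subdegree f, an(f) = fps_nth f (subdegree f).\<close>
definition fan :: "'a::field fps \<Rightarrow> 'a" where
  "fan f = fps_nth f (subdegree f)"

definition feps :: "'a::field fps \<Rightarrow> 'a" where
  "feps f = fsign (fan f)"

definition scaled_squares :: "'a::field \<Rightarrow> 'a set" where
  "scaled_squares e = {e * c ^ 2 | c. True}"

definition Phi :: "'a::field set \<Rightarrow> nat \<Rightarrow> 'a fps set" where
  "Phi M n = {x. x \<noteq> 0 \<and> subdegree x mod 2 = n mod 2 \<and> subdegree x \<ge> n \<and> fan x \<in> M} \<union> {0}"

definition PO :: "'a::field fps \<Rightarrow> 'a fps set" where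
  "PO g = {s0 + s1 * g | s0 s1. s0 \<in> sum_squares \<and> s1 \<in> sum_squares}"

end

theory Submission imports Defs begin
unbundle fps_syntax

fun sqc :: "'a::field fps \<Rightarrow> nat \<Rightarrow> 'a" where
  "sqc u 0 = 1"
| "sqc u (Suc n) = (u $ Suc n - (\<Sum>i\<in>{1..n}. sqc u i * sqc u (Suc n - i))) / 2"

lemma sqrt_exists:
  fixes u :: "'a::field fps"
  assumes two: "(2::'a) \<noteq> 0" and u0: "u $ 0 = 1"
  shows "\<exists>s. s ^ 2 = u"
proof
  let ?s = "Abs_fps (sqc u)"
  show "?s ^ 2 = u"
  proof (rule fps_ext)
    fix m
    show "(?s ^ 2) $ m = u $ m"
    proof (cases m)
      case 0 thus ?thesis using u0 by (simp add: power2_eq_square)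
    next
      case (Suc n)
      have "(?s ^ 2) $ m = (\<Sum>i=0..Suc n. sqc u i * sqc u (Suc n - i))"
        by (simp add: power2_eq_square fps_mult_nth Suc)
      also have "\<dots> = sqc u 0 * sqc u (Suc n) + (\<Sum>i=1..Suc n. sqc u i * sqc u (Suc n - i))"
        by (simp add: sum.atLeast_Suc_atMost)
      also have "(\<Sum>i=1..Suc n. sqc u i * sqc u (Suc n - i)) = (\<Sum>i=1..n. sqc u i * sqc u (Suc n - i)) + sqc u (Suc n)"
        by (simp add: sum.cl_ivl_Suc)
      finally have "(?s ^ 2) $ m = 2 * sqc u (Suc n) + (\<Sum>i=1..n. sqc u i * sqc u (Suc n - i))"
        by simp
      also have "\<dots> = u $ Suc n"
        using two by (simp only: sqc.simps) (simp add: field_simps)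
      finally show ?thesis using Suc by simp
    qed
  qed
qed

lemma sq_in_sum_squares: "(x::'a::comm_ring_1)^2 \<in> sum_squares"
  unfolding sum_squares_def by (rule CollectI, rule exI[of _ "[x]"]) simp

lemma sq2_in_sum_squares: "(x::'a::comm_ring_1)^2 + y^2 \<in> sum_squares"
  unfolding sum_squares_def by (rule CollectI, rule exI[of _ "[x,y]"]) simp

lemma E_two:
  assumes E: "euclidean_field TYPE('a::field)"
  shows "(2::'a) \<noteq> 0"
proof
  assume "(2::'a) = 0"
  hence "(-1::'a) = 1^2" by (simp add: eq_neg_iff_add_eq_0)
  hence "(-1::'a) \<in> sum_squares" using sq_in_sum_squares by metis
  thus False using E unfolding euclidean_field_def formally_real_def by blast
qed

lemma E_notsq:
  assumes E: "euclidean_field TYPE('a::field)"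
  shows "(-1::'a) \<notin> squares"
proof
  assume "(-1::'a) \<in> squares"
  then obtain c where "(-1::'a) = c^2" unfolding squares_def by auto
  hence "(-1::'a) \<in> sum_squares" using sq_in_sum_squares by metis
  thus False using E unfolding euclidean_field_def formally_real_def by blast
qed

lemma E_sq_add:
  assumes E: "euclidean_field TYPE('a::field)" and c: "(c::'a) \<noteq> 0"
  shows "c^2 + d^2 \<noteq> 0 \<and> c^2 + d^2 \<in> squares"
proof -
  have nr: "(-1::'a) \<notin> sum_squares" using E unfolding euclidean_field_def formally_real_def by blast
  have nz: "c^2 + d^2 \<noteq> 0"
  proof
    assume h: "c^2 + d^2 = 0"
    have "(d/c)^2 = -1" using h c by (simp add: field_simps power2_eq_square eq_neg_iff_add_eq_0 add.commute)
    thus False using nr sq_in_sum_squares by metis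
  qed
  moreover have "c^2 + d^2 \<in> squares"
  proof (rule ccontr)
    assume ns: "c^2 + d^2 \<notin> squares"
    have "c^2 + d^2 \<in> squares \<union> uminus ` squares" using E unfolding euclidean_field_def by blast
    then obtain e where e: "c^2 + d^2 = -(e^2)" using ns unfolding squares_def by auto
    with nz have e0: "e \<noteq> 0" by auto
    have "(c/e)^2 + (d/e)^2 = -1" using e e0 by (simp add: field_simps power2_eq_square)
    thus False using nr sq2_in_sum_squares by metis
  qed
  ultimately show ?thesis by blast
qed

lemma E_fsign:
  assumes E: "euclidean_field TYPE('a::field)" and c: "(c::'a) \<noteq> 0"
  shows "\<exists>d. d \<noteq> 0 \<and> c = fsign c * d^2" "fsign c = 1 \<or> fsign c = -1"
proof -
  show "fsign c = 1 \<or> fsign c = -1" unfolding fsign_def by auto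
  show "\<exists>d. d \<noteq> 0 \<and> c = fsign c * d^2"
  proof (cases "c \<in> squares")
    case True
    then obtain d where "c = d^2" unfolding squares_def by auto
    thus ?thesis using True c unfolding fsign_def by auto
  next
    case False
    have "c \<in> squares \<union> uminus ` squares" using E unfolding euclidean_field_def by blast
    then obtain d where "c = -(d^2)" using False unfolding squares_def by auto
    thus ?thesis using False c unfolding fsign_def by auto
  qed
qed

lemma fsign_pm1:
  assumes E: "euclidean_field TYPE('a::field)" and "e = 1 \<or> e = (-1::'a)"
  shows "fsign e = e"
proof -
  have "(1::'a) \<in> squares" unfolding squares_def by (rule CollectI, rule exI[of _ 1]) simp
  thus ?thesis using assms E_notsq[OF E] unfolding fsign_def by auto
qed

lemma fan_mult:
  fixes f g :: "'a::field fps"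
  assumes "f \<noteq> 0" "g \<noteq> 0"
  shows "subdegree (f*g) = subdegree f + subdegree g" "fan (f*g) = fan f * fan g"
  using assms by (simp_all add: fan_def)

lemma add_low:
  fixes x y :: "'a::field fps"
  assumes "x \<noteq> 0" "y = 0 \<or> subdegree x < subdegree y"
  shows "x + y \<noteq> 0" "subdegree (x+y) = subdegree x" "fan (x+y) = fan x"
proof -
  have 1: "(x+y) $ subdegree x = x $ subdegree x" using assms by auto
  have 2: "(x+y) $ subdegree x \<noteq> 0" using 1 assms by simp
  show "x + y \<noteq> 0" by (metis 2 fps_zero_nth)
  show s: "subdegree (x+y) = subdegree x"
  proof (rule subdegreeI[OF 2])
    fix i assume i: "i < subdegree x"
    have "x $ i = 0" using i by (rule nth_less_subdegree_zero)
    moreover have "y $ i = 0"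
    proof (cases "y = 0")
      case False
      hence "i < subdegree y" using i assms by linarith
      thus ?thesis by (rule nth_less_subdegree_zero)
    qed simp
    ultimately show "(x + y) $ i = 0" by simp
  qed
  show "fan (x+y) = fan x" unfolding fan_def s using 1 .
qed

definition SQ :: "'a::field fps set" where "SQ = Phi squares 0"

lemma SQ_iff: "x \<in> SQ \<longleftrightarrow> x = 0 \<or> (even (subdegree x) \<and> fan x \<in> squares)"
  unfolding SQ_def Phi_def by auto

lemma SQ_sq: "(y::'a::field fps)^2 \<in> SQ"
proof (cases "y = 0")
  case False
  thus ?thesis unfolding SQ_iff power2_eq_square
    by (simp add: fan_mult squares_def power2_eq_square) blast
qed (simp add: SQ_iff)

lemma SQ_mult:
  assumes x: "x \<in> SQ" and y: "y \<in> SQ" shows "(x*y::'a::field fps) \<in> SQ"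
proof (cases "x = 0 \<or> y = 0")
  case True thus ?thesis by (auto simp: SQ_iff)
next
  case False
  then obtain a b where a: "fan x = a^2" and b: "fan y = b^2" using x y unfolding SQ_iff squares_def by auto
  have "fan (x*y) = (a*b)^2" using False a b by (simp add: fan_mult power_mult_distrib)
  thus ?thesis using False x y unfolding SQ_iff squares_def by (auto simp: fan_mult)
qed

lemma SQ_add:
  assumes E: "euclidean_field TYPE('a::field)"
  shows "x \<in> SQ \<Longrightarrow> y \<in> SQ \<Longrightarrow> (x+y::'a fps) \<in> SQ"
proof -
  assume x: "x \<in> SQ" and y: "y \<in> SQ"
  show "x + y \<in> SQ"
  proof (cases "x = 0 \<or> y = 0")
    case True thus ?thesis using x y by auto
  next
    case False
    hence x0: "x \<noteq> 0" and y0: "y \<noteq> 0" by auto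
    consider "subdegree x < subdegree y" | "subdegree y < subdegree x" | "subdegree x = subdegree y" by linarith
    thus ?thesis
    proof cases
      case 1 thus ?thesis using add_low[of x y] x0 x unfolding SQ_iff by auto
    next
      case 2 thus ?thesis using add_low[of y x] y0 y unfolding SQ_iff by (auto simp: add.commute)
    next
      case 3
      obtain c where c: "fan x = c^2" using x x0 unfolding SQ_iff squares_def by auto
      obtain d where d: "fan y = d^2" using y y0 unfolding SQ_iff squares_def by auto
      have c0: "c \<noteq> 0" using c x0 unfolding fan_def by auto
      have k: "(x+y) $ subdegree x = c^2 + d^2" using c d 3 unfolding fan_def by simp
      note cd = E_sq_add[OF E c0, of d]
      have s: "subdegree (x+y) = subdegree x"
      proof (rule subdegreeI)
        show "(x + y) $ subdegree x \<noteq> 0" using k cd by simp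
        fix i assume i: "i < subdegree x"
        have "x $ i = 0" using i by (rule nth_less_subdegree_zero)
        moreover have "y $ i = 0" using i 3 by (intro nth_less_subdegree_zero) simp
        ultimately show "(x + y) $ i = 0" by simp
      qed
      have "x + y \<noteq> 0" by (metis k cd fps_zero_nth)
      thus ?thesis using s k cd x x0 unfolding SQ_iff fan_def by auto
    qed
  qed
qed

lemma SQ_is_sq:
  assumes E: "euclidean_field TYPE('a::field)" and x: "(x::'a fps) \<in> SQ"
  shows "\<exists>y. x = y^2"
proof (cases "x = 0")
  case True thus ?thesis by (intro exI[of _ 0]) simp
next
  case False
  obtain m where m: "subdegree x = 2*m" using x False unfolding SQ_iff by auto
  obtain c where c: "fan x = c^2" using x False unfolding SQ_iff squares_def by auto
  have c0: "c \<noteq> 0" using c False unfolding fan_def by auto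
  define u where "u = fps_const (inverse (c^2)) * fps_shift (2*m) x"
  have "u $ 0 = 1" using c c0 m unfolding u_def fan_def by (simp add: field_simps)
  then obtain s where s: "s^2 = u" using sqrt_exists[OF E_two[OF E]] by blast
  have d: "x = fps_shift (2*m) x * fps_X^(2*m)" using subdegree_decompose[of x] m by simp
  have e: "fps_shift (2*m) x = fps_const (c^2) * u" using c0
    by (simp add: u_def mult.assoc[symmetric] fps_const_mult)
  have X: "(fps_X::'a fps)^(2*m) = (fps_X^m)^2" by (metis power_mult mult.commute)
  have "x = fps_const (c^2) * s^2 * (fps_X^m)^2" using d e X s by simp
  also have "\<dots> = (fps_const c * s * fps_X^m)^2"
    by (simp add: power_mult_distrib fps_const_power)
  finally show ?thesis by blast
qed

lemma sum_squares_fps: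
  assumes E: "euclidean_field TYPE('a::field)"
  shows "(sum_squares :: 'a fps set) = SQ"
proof
  show "sum_squares \<subseteq> (SQ :: 'a fps set)"
  proof
    fix z :: "'a fps" assume "z \<in> sum_squares"
    then obtain xs where z: "z = sum_list (map (\<lambda>x. x^2) xs)" unfolding sum_squares_def by auto
    have "sum_list (map (\<lambda>x. x^2) xs) \<in> (SQ :: 'a fps set)"
      by (induction xs) (auto simp: SQ_iff[of 0] intro!: SQ_add[OF E] SQ_sq)
    thus "z \<in> SQ" using z by simp
  qed
  show "SQ \<subseteq> (sum_squares :: 'a fps set)"
    using SQ_is_sq[OF E] sq_in_sum_squares by blast
qed

lemma PO_SQ:
  assumes E: "euclidean_field TYPE('a::field)"
  shows "PO (f::'a fps) = {s0 + s1 * f | s0 s1. s0 \<in> SQ \<and> s1 \<in> SQ}"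
  unfolding PO_def sum_squares_fps[OF E] ..


lemma dvd_decomp:
  fixes x g :: "'a::field fps"
  assumes "x \<noteq> 0" "g \<noteq> 0" "subdegree g \<le> subdegree x"
  shows "\<exists>q. q \<noteq> 0 \<and> x = q * g"
proof -
  have "g dvd x" using fps_dvd_iff assms by blast
  then obtain k where "x = g * k" by (auto elim: dvdE)
  thus ?thesis using assms by (intro exI[of _ k]) (auto simp: mult.commute)
qed

lemma lead_decomp:
  assumes E: "euclidean_field TYPE('a::field)" and f: "(f::'a fps) \<noteq> 0"
  shows "\<exists>d. d \<noteq> 0 \<and> fan f = feps f * d^2" "feps f = 1 \<or> feps f = -1"
  using E_fsign[OF E, of "fan f"] f unfolding feps_def fan_def by auto

lemma caseA:
  assumes E: "euclidean_field TYPE('a::field)" and f: "(f::'a fps) \<noteq> 0"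
    and odd: "odd (subdegree f)"
  shows "PO f = SQ \<union> Phi (scaled_squares (feps f)) (subdegree f)"
proof -
  let ?n = "subdegree f" and ?e = "feps f"
  obtain d where d0: "d \<noteq> 0" and d: "fan f = ?e * d^2" using lead_decomp[OF E f] by blast
  have e0: "?e \<noteq> 0" using lead_decomp(2)[OF E f] by auto
  have tprop: "s1 * f \<noteq> 0 \<and> subdegree (s1*f) mod 2 = ?n mod 2 \<and> subdegree (s1*f) \<ge> ?n
      \<and> fan (s1*f) \<in> scaled_squares ?e" if s1: "s1 \<in> SQ" "s1 \<noteq> 0" for s1
  proof -
    obtain a where a: "fan s1 = a^2" using s1 unfolding SQ_iff squares_def by auto
    have "fan (s1*f) = ?e * (a*d)^2" using a d s1 f by (simp add: fan_mult power_mult_distrib)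
    moreover have "even (subdegree s1)" using s1 unfolding SQ_iff by auto
    ultimately show ?thesis using s1 f unfolding scaled_squares_def
      by (auto simp: fan_mult)
  qed
  show ?thesis
  proof
    show "PO f \<subseteq> SQ \<union> Phi (scaled_squares ?e) ?n"
    proof
      fix z assume "z \<in> PO f"
      then obtain s0 s1 where z: "z = s0 + s1 * f" and s0: "s0 \<in> SQ" and s1: "s1 \<in> SQ"
        unfolding PO_SQ[OF E] by blast
      show "z \<in> SQ \<union> Phi (scaled_squares ?e) ?n"
      proof (cases "s1 = 0")
        case True thus ?thesis using z s0 by simp
      next
        case False
        note t = tprop[OF s1 False]
        show ?thesis
        proof (cases "s0 \<noteq> 0 \<and> subdegree s0 < subdegree (s1*f)")
          case True
          thus ?thesis using add_low[of s0 "s1*f"] s0 z by (auto simp: SQ_iff)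
        next
          case False
          have lt: "s0 = 0 \<or> subdegree (s1*f) < subdegree s0"
          proof (cases "s0 = 0")
            case False
            have "even (subdegree s0)" using s0 False unfolding SQ_iff by auto
            moreover have m: "subdegree (s1*f) mod 2 = ?n mod 2" using t by blast
            moreover have "odd (subdegree (s1*f))" using m odd by (simp add: even_iff_mod_2_eq_zero)
            ultimately have "subdegree (s1*f) \<noteq> subdegree s0" by auto
            thus ?thesis using \<open>\<not> (s0 \<noteq> 0 \<and> _)\<close> False by auto
          qed simp
          have z': "z = s1 * f + s0" using z by (simp add: add.commute)
          show ?thesis using add_low[of "s1*f" s0] lt t z' unfolding Phi_def by auto
        qed
      qed
    qed
  next
    show "SQ \<union> Phi (scaled_squares ?e) ?n \<subseteq> PO f"
    proof
      fix z assume zin: "z \<in> SQ \<union> Phi (scaled_squares ?e) ?n"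
      have 0: "(0::'a fps) \<in> SQ" by (simp add: SQ_iff)
      show "z \<in> PO f"
      proof (cases "z \<in> SQ")
        case True
        have "z = z + 0 * f" by simp
        thus ?thesis unfolding PO_SQ[OF E] using 0 True by blast
      next
        case False
        hence zP: "z \<noteq> 0" "subdegree z mod 2 = ?n mod 2" "subdegree z \<ge> ?n"
          "fan z \<in> scaled_squares ?e"
          using zin 0 unfolding Phi_def by auto
        obtain c where c: "fan z = ?e * c^2" using zP(4) unfolding scaled_squares_def by auto
        obtain q where q0: "q \<noteq> 0" and q: "z = q * f" using dvd_decomp[OF zP(1) f zP(3)] by blast
        have sq: "subdegree z = subdegree q + ?n" "fan z = fan q * fan f"
          using q q0 f by (simp_all add: fan_mult)
        have ev: "even (subdegree q)" using sq(1) zP(2) by presburger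
        have "fan q * (?e * d^2) = ?e * c^2" by (metis sq(2) c d)
        hence "fan q = (c/d)^2" using e0 d0 by (simp add: field_simps power2_eq_square)
        hence "q \<in> SQ" using ev unfolding SQ_iff squares_def by auto
        moreover have "z = 0 + q * f" using q by simp
        ultimately show ?thesis unfolding PO_SQ[OF E] using 0 by blast
      qed
    qed
  qed
qed

lemma caseB:
  assumes E: "euclidean_field TYPE('a::field)" and f: "(f::'a fps) \<noteq> 0"
    and ev: "even (subdegree f)" and e1: "feps f = 1"
  shows "PO f = SQ"
proof -
  obtain d where d: "fan f = feps f * d^2" using lead_decomp[OF E f] by blast
  have fS: "f \<in> SQ" using ev d e1 unfolding SQ_iff squares_def by auto
  have 0: "(0::'a fps) \<in> SQ" by (simp add: SQ_iff)
  show ?thesis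
  proof
    show "PO f \<subseteq> SQ" unfolding PO_SQ[OF E] using fS by (auto intro!: SQ_add[OF E] SQ_mult)
    show "SQ \<subseteq> PO f"
    proof
      fix z :: "'a fps" assume "z \<in> SQ"
      moreover have "z = z + 0 * f" by simp
      ultimately show "z \<in> PO f" unfolding PO_SQ[OF E] using 0 by blast
    qed
  qed
qed

lemma PhiUNIV:
  assumes "even n"
  shows "(z \<in> Phi UNIV n \<union> Phi UNIV (n+1)) \<longleftrightarrow> (z = 0 \<or> n \<le> subdegree z)"
  using assms unfolding Phi_def by auto presburger+

lemma caseC:
  assumes E: "euclidean_field TYPE('a::field)" and f: "(f::'a fps) \<noteq> 0"
    and ev: "even (subdegree f)" and e1: "feps f \<noteq> 1"
  shows "PO f = SQ \<union> Phi UNIV (subdegree f) \<union> Phi UNIV (subdegree f + 1)"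
proof -
  let ?n = "subdegree f"
  obtain d where d0: "d \<noteq> 0" and d: "fan f = feps f * d^2" using lead_decomp[OF E f] by blast
  have em: "feps f = -1" using lead_decomp(2)[OF E f] e1 by auto
  have 0: "(0::'a fps) \<in> SQ" by (simp add: SQ_iff)
  have R: "z \<in> SQ \<union> Phi UNIV ?n \<union> Phi UNIV (?n + 1) \<longleftrightarrow> z \<in> SQ \<or> z = 0 \<or> ?n \<le> subdegree z" for z
    using PhiUNIV[OF ev, of z] by blast
  show ?thesis
  proof (rule set_eqI)
    fix z
    show "z \<in> PO f \<longleftrightarrow> z \<in> SQ \<union> Phi UNIV ?n \<union> Phi UNIV (?n + 1)"
      unfolding R
    proof
      assume "z \<in> PO f"
      then obtain s0 s1 where z: "z = s0 + s1 * f" and s0: "s0 \<in> SQ" and s1: "s1 \<in> SQ"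
        unfolding PO_SQ[OF E] by blast
      show "z \<in> SQ \<or> z = 0 \<or> ?n \<le> subdegree z"
      proof (cases "s0 \<noteq> 0 \<and> subdegree s0 < ?n")
        case True
        have "s1 * f = 0 \<or> subdegree s0 < subdegree (s1 * f)"
          using True f by (cases "s1 = 0") auto
        thus ?thesis using add_low[of s0 "s1*f"] s0 z True unfolding SQ_iff by auto
      next
        case False
        have "z = 0 \<or> ?n \<le> subdegree z"
        proof (cases "z = 0")
          case False
          have "?n \<le> subdegree z"
          proof (rule subdegree_geI[OF False])
            fix i assume i: "i < ?n"
            have "s0 $ i = 0"
            proof (cases "s0 = 0")
              case False
              hence "i < subdegree s0" using \<open>\<not> (s0 \<noteq> 0 \<and> _)\<close> i by auto
              thus ?thesis by (rule nth_less_subdegree_zero)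
            qed simp
            moreover have "(s1 * f) $ i = 0"
              by (rule fps_mult_nth_eq0) (use i in simp)
            ultimately show "z $ i = 0" using z by simp
          qed
          thus ?thesis ..
        qed simp
        thus ?thesis by blast
      qed
    next
      assume zR: "z \<in> SQ \<or> z = 0 \<or> ?n \<le> subdegree z"
      show "z \<in> PO f"
      proof (cases "z \<in> SQ")
        case True
        have "z = z + 0 * f" by simp
        thus ?thesis unfolding PO_SQ[OF E] using 0 True by blast
      next
        case False
        hence z0: "z \<noteq> 0" and zn: "?n \<le> subdegree z" using zR 0 by auto
        have "-f \<in> SQ" using f ev d em unfolding SQ_iff squares_def fan_def by auto
        then obtain h where h: "-f = h^2" using SQ_is_sq[OF E] by blast
        have h0: "h \<noteq> 0" using h f by auto
        have "subdegree (h^2) = ?n" using h[symmetric] by simp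
        then obtain y where y: "z = y * h^2" using dvd_decomp[OF z0, of "h^2"] h0 zn by auto
        define k :: "'a fps" where "k = fps_const (inverse 2)"
        have k2: "k * 2 = 1"
        proof -
          have "(2::'a fps) = fps_const 2" by (metis fps_const_add one_add_one fps_const_1_eq_1)
          hence "k * 2 = fps_const (inverse 2 * 2)" unfolding k_def by (simp only: fps_const_mult)
          also have "inverse 2 * 2 = (1::'a)" using E_two[OF E] by simp
          finally show ?thesis by simp
        qed
        define a where "a = k * (y + 1)"
        define b where "b = k * (y - 1)"
        have "a^2 - b^2 = (k*2)^2 * y" unfolding a_def b_def by algebra
        hence ab: "a^2 - b^2 = y" using k2 by simp
        have "z = (a*h)^2 + b^2 * f"
        proof -
          have fe: "f = -(h^2)" using h by (metis minus_minus)
          have "(a*h)^2 + b^2 * f = (a^2 - b^2) * h^2"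
            unfolding fe by algebra
          thus ?thesis using ab y by simp
        qed
        thus ?thesis unfolding PO_SQ[OF E] using SQ_sq by blast
      qed
    qed
  qed
qed


lemma monom_props:
  assumes e: "(e::'a::field) \<noteq> 0"
  shows "fps_const e * fps_X ^ n \<noteq> 0" "subdegree (fps_const e * fps_X ^ n) = n"
    "fan (fps_const e * fps_X ^ n) = e"
proof -
  have nth: "(fps_const e * fps_X ^ n) $ k = (if k = n then e else 0)" for k
    by (simp add: fps_X_power_mult_right_nth[of "fps_const e", simplified mult.commute] fps_X_power_nth)
  have s: "subdegree (fps_const e * fps_X ^ n) = n"
    by (rule subdegreeI) (auto simp: nth e)
  show "subdegree (fps_const e * fps_X ^ n) = n" by (rule s)
  show "fps_const e * fps_X ^ n \<noteq> 0" by (metis nth e fps_zero_nth)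
  show "fan (fps_const e * fps_X ^ n) = e" unfolding fan_def s by (simp add: nth)
qed

theorem mainTheorem15:
  fixes f :: "'a::field fps"
  assumes "euclidean_field TYPE('a)"
    and "f \<noteq> 0"
  shows "(odd (subdegree f) \<longrightarrow>
            PO f = Phi squares 0 \<union> Phi (scaled_squares (feps f)) (subdegree f))
       \<and> (even (subdegree f) \<and> feps f = 1 \<longrightarrow> PO f = Phi squares 0)
       \<and> (\<not> odd (subdegree f) \<and> \<not> (even (subdegree f) \<and> feps f = 1) \<longrightarrow>
            PO f = Phi squares 0 \<union> Phi UNIV (subdegree f) \<union> Phi UNIV (subdegree f + 1))
       \<and> (even (subdegree f) \<and> feps f = 1 \<longrightarrow> PO f = PO 1)
       \<and> (\<not> (even (subdegree f) \<and> feps f = 1) \<longrightarrow>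
            PO f = PO (fps_const (feps f) * fps_X ^ subdegree f))"
proof -
  note E = assms(1) and f = assms(2)
  let ?e = "feps f" and ?n = "subdegree f"
  let ?g = "fps_const ?e * fps_X ^ ?n"
  have epm: "?e = 1 \<or> ?e = -1" using lead_decomp(2)[OF E f] .
  hence e0: "?e \<noteq> 0" by auto
  note g = monom_props[OF e0, of ?n]
  have ge: "feps ?g = ?e" using fsign_pm1[OF E epm] g(3) by (simp only: feps_def[of ?g])
  have one: "PO (1::'a fps) = SQ"
  proof (rule caseB[OF E])
    have "(1::'a) \<in> squares" unfolding squares_def by (rule CollectI, rule exI[of _ 1]) simp
    thus "feps (1::'a fps) = 1" unfolding feps_def fan_def fsign_def by simp
  qed simp_all
  have gn: "subdegree ?g = ?n" by (rule g(2))
  consider (A) "odd ?n" | (B) "even ?n" "?e = 1" | (C) "even ?n" "?e \<noteq> 1" by blast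
  thus ?thesis
  proof cases
    case A
    have "PO f = SQ \<union> Phi (scaled_squares ?e) ?n" using caseA[OF E f A] .
    moreover have "PO ?g = SQ \<union> Phi (scaled_squares ?e) ?n" using caseA[OF E g(1)] A gn ge by simp
    ultimately show ?thesis using A unfolding SQ_def by simp
  next
    case B
    have "PO f = SQ" using caseB[OF E f B] .
    thus ?thesis using B one unfolding SQ_def by simp
  next
    case C
    have "PO f = SQ \<union> Phi UNIV ?n \<union> Phi UNIV (?n + 1)" using caseC[OF E f C] .
    moreover have "PO ?g = SQ \<union> Phi UNIV ?n \<union> Phi UNIV (?n + 1)" using caseC[OF E g(1)] C gn ge by simp
    ultimately show ?thesis using C unfolding SQ_def by simp
  qed
qed

end
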